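(* Let $\mathbb F$ be a field, fix a partition of $\{1,\dots,m\}$ into consecutive (possibly empty) intervals $I_1,\dots,I_k$ (in increasing order), and let $D$ be an $m\times m$ differential matrix over $\mathbb F$ that is block-superdiagonal with respect to this partition. Then there exist an $m\times m$ almost-Jordan differential matrix $\underline D$ that is block-superdiagonal with respect to the same partition, and an $m\times m$ triangular matrix $B$ that is block-diagonal with respect to the same partition, such that $D=B\,\underline D\,B^{-1}$.
   Context: A differential matrix is a square matrix $D$ with $D^2=0$. A differential matrix is Jordan if it is block-diagonal with every diagonal block equal to either the $1\times 1$ zero matrix $[0]$ or the $2\times 2$ matrix $\begin{bmatrix}0&1\\0&0\end{bmatrix}$. A differential matrix $\underline D$ is almost-Jordan if there is a permutation matrix $P$ such that $P^{-1}\underline D P$ is Jordan. A square matrix is triangular if it is upper-triangular and invertible. Given a partition of the index set $\{1,\dots,m\}$ into consecutive intervals $I_1,\dots,I_k$, an $m\times m$ matrix $M$ is block-diagonal if $M_{ab}=0$ whenever $a\in I_i$, $b\in I_j$ with $i\ne j$, and block-superdiagonal if $M_{ab}=0$ whenever $a\in I_i$, $b\in I_j$ with $j\neq i+1$. *)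

theory Defs
  imports "Jordan_Normal_Form.Matrix" "HOL-Combinatorics.Permutations"
begin

(* Matrices are Jordan_Normal_Form matrices with 0-based indices {0..<m}.
   A partition of the index set into k consecutive (possibly empty) intervals
   in increasing order is given by cut points c 0 = 0 <= c 1 <= ... <= c k = m;
   the i-th interval (1 <= i <= k) is {c (i-1) ..< c i}. *)

definition interval_partition :: "nat \<Rightarrow> nat \<Rightarrow> (nat \<Rightarrow> nat) \<Rightarrow> bool" where
  "interval_partition m k c \<longleftrightarrow> c 0 = 0 \<and> c k = m \<and> (\<forall>i<k. c i \<le> c (Suc i))"

definition block :: "(nat \<Rightarrow> nat) \<Rightarrow> nat \<Rightarrow> nat set" where
  "block c i = {c (i - 1) ..< c i}"

definition block_diagonal :: "nat \<Rightarrow> (nat \<Rightarrow> nat) \<Rightarrow> 'a::zero mat \<Rightarrow> bool" where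
  "block_diagonal k c M \<longleftrightarrow>
     (\<forall>i\<in>{1..k}. \<forall>j\<in>{1..k}. \<forall>a\<in>block c i. \<forall>b\<in>block c j. i \<noteq> j \<longrightarrow> M $$ (a, b) = 0)"

definition block_superdiagonal :: "nat \<Rightarrow> (nat \<Rightarrow> nat) \<Rightarrow> 'a::zero mat \<Rightarrow> bool" where
  "block_superdiagonal k c M \<longleftrightarrow>
     (\<forall>i\<in>{1..k}. \<forall>j\<in>{1..k}. \<forall>a\<in>block c i. \<forall>b\<in>block c j. j \<noteq> i + 1 \<longrightarrow> M $$ (a, b) = 0)"

definition differential :: "'a::semiring_1 mat \<Rightarrow> bool" where
  "differential D \<longleftrightarrow> square_mat D \<and> D * D = 0\<^sub>m (dim_row D) (dim_col D)"

(* Jordan: block diagonal with diagonal blocks [0] (size 1) or [[0,1],[0,0]] (size 2);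
   ss is the list of block sizes along the diagonal. *)
definition jordan_of_sizes :: "nat list \<Rightarrow> 'a::{zero,one} mat" where
  "jordan_of_sizes ss = mat (sum_list ss) (sum_list ss)
     (\<lambda>(a, b). if \<exists>i<length ss. ss ! i = 2 \<and> a = sum_list (take i ss) \<and> b = a + 1 then 1 else 0)"

definition jordan :: "'a::semiring_1 mat \<Rightarrow> bool" where
  "jordan D \<longleftrightarrow> differential D \<and> (\<exists>ss. set ss \<subseteq> {1, 2} \<and> D = jordan_of_sizes ss)"

definition perm_matrix :: "nat \<Rightarrow> (nat \<Rightarrow> nat) \<Rightarrow> 'a::{zero,one} mat" where
  "perm_matrix m p = mat m m (\<lambda>(i, j). if i = p j then 1 else 0)"

definition almost_jordan :: "'a::semiring_1 mat \<Rightarrow> bool" where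
  "almost_jordan D \<longleftrightarrow> differential D \<and>
     (\<exists>p Pinv. p permutes {..<dim_row D} \<and>
        inverts_mat (perm_matrix (dim_row D) p) Pinv \<and> inverts_mat Pinv (perm_matrix (dim_row D) p) \<and>
        jordan (Pinv * D * perm_matrix (dim_row D) p))"

definition triangular :: "'a::semiring_1 mat \<Rightarrow> bool" where
  "triangular B \<longleftrightarrow> upper_triangular B \<and> invertible_mat B"

end

theory Submission
  imports Defs "Jordan_Normal_Form.Determinant"
begin

lemma ip_mono:
  assumes "interval_partition m k c" "i \<le> j" "j \<le> k"
  shows "c i \<le> c j"
  using assms(2,3)
proof (induction j)
  case 0 then show ?case by simp
next
  case (Suc j)
  show ?case
  proof (cases "i = Suc j")
    case True then show ?thesis by simp
  next
    case False
    then have "c i \<le> c j" using Suc by simp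
    also have "c j \<le> c (Suc j)" using assms(1) Suc.prems unfolding interval_partition_def by auto
    finally show ?thesis .
  qed
qed

definition blk :: "(nat \<Rightarrow> nat) \<Rightarrow> nat \<Rightarrow> nat" where
  "blk c x = (LEAST i. x < c i)"

lemma blk_props:
  assumes ip: "interval_partition m k c" and x: "x < m"
  shows "1 \<le> blk c x" "blk c x \<le> k" "x \<in> block c (blk c x)"
proof -
  have ck: "x < c k" using ip x unfolding interval_partition_def by simp
  show le: "blk c x \<le> k" unfolding blk_def by (rule Least_le[of "\<lambda>i. x < c i", OF ck])
  have lt: "x < c (blk c x)" unfolding blk_def by (rule LeastI[of "\<lambda>i. x < c i", OF ck])
  have ne: "blk c x \<noteq> 0"
  proof
    assume "blk c x = 0" then show False using lt ip unfolding interval_partition_def by simp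
  qed
  then show "1 \<le> blk c x" by simp
  have "\<not> x < c (blk c x - 1)" unfolding blk_def
    by (rule not_less_Least) (use ne in \<open>simp add: blk_def\<close>)
  then show "x \<in> block c (blk c x)" using lt unfolding block_def by auto
qed

lemma blk_eq:
  assumes ip: "interval_partition m k c" and i: "1 \<le> i" "i \<le> k" and x: "x \<in> block c i"
  shows "blk c x = i"
proof -
  have x1: "c (i - 1) \<le> x" "x < c i" using x unfolding block_def by auto
  have le: "blk c x \<le> i" unfolding blk_def by (rule Least_le[of "\<lambda>i. x < c i", OF x1(2)])
  have lt: "x < c (blk c x)" unfolding blk_def by (rule LeastI[of "\<lambda>i. x < c i", OF x1(2)])
  show ?thesis
  proof (rule ccontr)
    assume "blk c x \<noteq> i"
    then have "blk c x \<le> i - 1" using le by simp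
    then have "c (blk c x) \<le> c (i - 1)" using ip_mono[OF ip _] i by simp
    then show False using lt x1 by simp
  qed
qed

lemma blk_mono:
  assumes "x \<le> y" "y < c j"
  shows "blk c x \<le> blk c y"
proof -
  have y: "y < c (blk c y)" unfolding blk_def by (rule LeastI[of "\<lambda>i. y < c i", OF assms(2)])
  show ?thesis unfolding blk_def by (rule Least_le) (use y assms(1) in \<open>simp add: blk_def\<close>)
qed

lemma block_lt_m:
  assumes ip: "interval_partition m k c" and "i \<le> k" "a \<in> block c i"
  shows "a < m"
proof -
  have "c i \<le> c k" using ip_mono[OF ip] assms by simp
  then show ?thesis using assms ip unfolding block_def interval_partition_def by auto
qed

lemma bsd_iff:
  assumes ip: "interval_partition m k c"
  shows "block_superdiagonal k c M \<longleftrightarrow>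
     (\<forall>a b. a < m \<longrightarrow> b < m \<longrightarrow> M $$ (a, b) \<noteq> 0 \<longrightarrow> blk c b = blk c a + 1)"
proof
  assume H: "block_superdiagonal k c M"
  show "\<forall>a b. a < m \<longrightarrow> b < m \<longrightarrow> M $$ (a, b) \<noteq> 0 \<longrightarrow> blk c b = blk c a + 1"
  proof (intro allI impI)
    fix a b assume "a < m" "b < m" "M $$ (a, b) \<noteq> 0"
    then show "blk c b = blk c a + 1"
      using H blk_props[OF ip, of a] blk_props[OF ip, of b] unfolding block_superdiagonal_def
      by force
  qed
next
  assume H: "\<forall>a b. a < m \<longrightarrow> b < m \<longrightarrow> M $$ (a, b) \<noteq> 0 \<longrightarrow> blk c b = blk c a + 1"
  show "block_superdiagonal k c M" unfolding block_superdiagonal_def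
  proof (intro ballI impI)
    fix i j a b assume "i \<in> {1..k}" "j \<in> {1..k}" "a \<in> block c i" "b \<in> block c j" "j \<noteq> i + 1"
    then show "M $$ (a, b) = 0"
      using H blk_eq[OF ip, of i a] blk_eq[OF ip, of j b] block_lt_m[OF ip, of i a] block_lt_m[OF ip, of j b]
      by auto
  qed
qed

lemma bd_iff:
  assumes ip: "interval_partition m k c"
  shows "block_diagonal k c M \<longleftrightarrow>
     (\<forall>a b. a < m \<longrightarrow> b < m \<longrightarrow> M $$ (a, b) \<noteq> 0 \<longrightarrow> blk c a = blk c b)"
proof
  assume H: "block_diagonal k c M"
  show "\<forall>a b. a < m \<longrightarrow> b < m \<longrightarrow> M $$ (a, b) \<noteq> 0 \<longrightarrow> blk c a = blk c b"
  proof (intro allI impI)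
    fix a b assume "a < m" "b < m" "M $$ (a, b) \<noteq> 0"
    then show "blk c a = blk c b"
      using H blk_props[OF ip, of a] blk_props[OF ip, of b] unfolding block_diagonal_def
      by force
  qed
next
  assume H: "\<forall>a b. a < m \<longrightarrow> b < m \<longrightarrow> M $$ (a, b) \<noteq> 0 \<longrightarrow> blk c a = blk c b"
  show "block_diagonal k c M" unfolding block_diagonal_def
  proof (intro ballI impI)
    fix i j a b assume "i \<in> {1..k}" "j \<in> {1..k}" "a \<in> block c i" "b \<in> block c j" "i \<noteq> j"
    then show "M $$ (a, b) = 0"
      using H blk_eq[OF ip, of i a] blk_eq[OF ip, of j b] block_lt_m[OF ip, of i a] block_lt_m[OF ip, of j b]
      by auto
  qed
qed

definition mv :: "'a::field mat \<Rightarrow> nat \<Rightarrow> (nat \<Rightarrow> 'a) \<Rightarrow> nat \<Rightarrow> 'a" where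
  "mv D m f = (\<lambda>x. if x < m then (\<Sum>y<m. D $$ (x, y) * f y) else 0)"

definition lc :: "(nat \<Rightarrow> 'a::field) \<Rightarrow> (nat \<Rightarrow> nat \<Rightarrow> 'a) \<Rightarrow> nat set \<Rightarrow> nat \<Rightarrow> 'a" where
  "lc w b J = (\<lambda>x. \<Sum>j\<in>J. w j * b j x)"

lemma mv_diff: "mv D m (\<lambda>x. f x - g x) = (\<lambda>x. mv D m f x - mv D m g x)"
  unfolding mv_def by (auto simp: algebra_simps sum_subtractf)

lemma mv_lc: "mv D m (lc w b J) = lc w (\<lambda>j. mv D m (b j)) J"
proof
  fix x
  show "mv D m (lc w b J) x = lc w (\<lambda>j. mv D m (b j)) J x"
  proof (cases "x < m")
    case True
    have "(\<Sum>y<m. D $$ (x, y) * (\<Sum>j\<in>J. w j * b j y))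
        = (\<Sum>y<m. \<Sum>j\<in>J. D $$ (x, y) * (w j * b j y))"
      by (simp add: sum_distrib_left)
    also have "\<dots> = (\<Sum>j\<in>J. \<Sum>y<m. D $$ (x, y) * (w j * b j y))"
      by (rule sum.swap)
    also have "\<dots> = (\<Sum>j\<in>J. w j * (\<Sum>y<m. D $$ (x, y) * b j y))"
      by (simp add: sum_distrib_left mult.left_commute)
    finally show ?thesis using True unfolding mv_def lc_def by simp
  next
    case False then show ?thesis unfolding mv_def lc_def by simp
  qed
qed

lemma lc_indep:
  assumes d: "\<forall>j<n. b j j \<noteq> 0" and u: "\<forall>j<n. \<forall>x. j < x \<longrightarrow> b j x = 0"
    and z: "\<forall>x. lc w b {..<n} x = 0" and j: "j < n"
  shows "w j = (0::'a::field)"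
  using d u z j
proof (induction n arbitrary: j)
  case 0 then show ?case by simp
next
  case (Suc n)
  have "lc w b {..<Suc n} n = w n * b n n + (\<Sum>j<n. w j * b j n)"
    unfolding lc_def by (simp add: add.commute)
  also have "(\<Sum>j<n. w j * b j n) = 0"
    using Suc.prems(2) by (intro sum.neutral) auto
  finally have "w n * b n n = 0" using Suc.prems(3) by simp
  then have wn: "w n = 0" using Suc.prems(1) by simp
  have "\<forall>x. lc w b {..<n} x = 0"
  proof
    fix x
    have "lc w b {..<Suc n} x = w n * b n x + lc w b {..<n} x"
      unfolding lc_def by (simp add: add.commute)
    then show "lc w b {..<n} x = 0" using wn Suc.prems(3) by simp
  qed
  then show ?case using Suc by (cases "j = n") (auto simp: wn)
qed

lemma lc_indep_set:
  fixes A :: "nat set"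
  assumes d: "\<forall>j<n. b j j \<noteq> 0" and u: "\<forall>j<n. \<forall>x. j < x \<longrightarrow> b j x = 0"
    and A: "A \<subseteq> {..<n}" and z: "\<forall>x. (\<Sum>i\<in>A. g i * b i x) = 0" and j: "j \<in> A"
  shows "g j = (0::'a::field)"
proof -
  let ?w = "\<lambda>i. if i \<in> A then g i else 0"
  have "\<forall>x. lc ?w b {..<n} x = 0"
  proof
    fix x
    have "lc ?w b {..<n} x = (\<Sum>i\<in>{..<n}. if i \<in> A then g i * b i x else 0)"
      unfolding lc_def by (intro sum.cong) auto
    also have "\<dots> = (\<Sum>i\<in>A. g i * b i x)"
      using A by (simp add: sum.If_cases Int_absorb1)
    finally show "lc ?w b {..<n} x = 0" using z by simp
  qed
  from lc_indep[OF d u this, of j] j A show ?thesis by auto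
qed

lemma lc_expand:
  assumes "\<forall>j<n. b j j \<noteq> 0" and "\<forall>j<n. \<forall>x. j < x \<longrightarrow> b j x = 0"
    and "\<forall>j<n. \<forall>x. b j x \<noteq> 0 \<longrightarrow> (Q x \<longleftrightarrow> Q j)"
    and "\<forall>x. v x \<noteq> 0 \<longrightarrow> x < n \<and> Q x"
  shows "\<exists>w. v = lc w b {..<n} \<and> (\<forall>j. w j \<noteq> (0::'a::field) \<longrightarrow> j < n \<and> Q j)"
  using assms
proof (induction n arbitrary: v)
  case 0
  then have "v = lc (\<lambda>_. 0) b {..<0}" unfolding lc_def by auto
  then show ?case by auto
next
  case (Suc n)
  define a where "a = v n / b n n"
  define v' where "v' = (\<lambda>x. v x - a * b n x)"
  have bnn: "b n n \<noteq> 0" using Suc.prems(1) by simp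
  have v'n: "v' n = 0" unfolding v'_def a_def using bnn by simp
  have "\<forall>x. v' x \<noteq> 0 \<longrightarrow> x < n \<and> Q x"
  proof (intro allI impI)
    fix x assume nz: "v' x \<noteq> 0"
    have "x \<le> n"
    proof (rule ccontr)
      assume "\<not> x \<le> n"
      then have "v x = 0" "b n x = 0" using Suc.prems(2,4) by (auto dest: spec[of _ x])
      then show False using nz unfolding v'_def by simp
    qed
    then have xn: "x < n" using v'n nz by (cases "x = n") auto
    have "Q x"
    proof (cases "v x = 0")
      case False then show ?thesis using Suc.prems(4) by auto
    next
      case True
      then have "a \<noteq> 0" "b n x \<noteq> 0" using nz unfolding v'_def by auto
      then have "v n \<noteq> 0" unfolding a_def by auto
      then have "Q n" using Suc.prems(4) by auto
      then show ?thesis using Suc.prems(3) \<open>b n x \<noteq> 0\<close> by auto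
    qed
    then show "x < n \<and> Q x" using xn by simp
  qed
  with Suc.IH[of v'] Suc.prems(1-3) obtain w where
    w: "v' = lc w b {..<n}" "\<forall>j. w j \<noteq> 0 \<longrightarrow> j < n \<and> Q j" by auto
  define w' where "w' = w(n := a)"
  have "v = lc w' b {..<Suc n}"
  proof
    fix x
    have "lc w' b {..<Suc n} x = a * b n x + (\<Sum>j<n. w' j * b j x)"
      unfolding lc_def w'_def by (simp add: add.commute)
    also have "(\<Sum>j<n. w' j * b j x) = lc w b {..<n} x"
      unfolding lc_def w'_def by (intro sum.cong) auto
    finally show "v x = lc w' b {..<Suc n} x" using w(1) unfolding v'_def
      by (metis add.commute diff_add_cancel)
  qed
  moreover have "\<forall>j. w' j \<noteq> 0 \<longrightarrow> j < Suc n \<and> Q j"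
  proof (intro allI impI)
    fix j assume "w' j \<noteq> 0"
    show "j < Suc n \<and> Q j"
    proof (cases "j = n")
      case True
      then have "v n \<noteq> 0" using \<open>w' j \<noteq> 0\<close> unfolding w'_def a_def by auto
      then show ?thesis using Suc.prems(4) True by auto
    next
      case False then show ?thesis using w(2) \<open>w' j \<noteq> 0\<close> unfolding w'_def by auto
    qed
  qed
  ultimately show ?case by blast
qed

locale setting =
  fixes m k :: nat and c :: "nat \<Rightarrow> nat" and D :: "'a::field mat"
  assumes ip: "interval_partition m k c"
    and Dc: "D \<in> carrier_mat m m"
    and DD: "D * D = 0\<^sub>m m m"
    and bsd: "block_superdiagonal k c D"
begin

abbreviation bk where "bk \<equiv> blk c"

lemma Dnz: "a < m \<Longrightarrow> b < m \<Longrightarrow> D $$ (a, b) \<noteq> 0 \<Longrightarrow> bk b = bk a + 1"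
  using bsd unfolding bsd_iff[OF ip] by blast

lemma Dlt: assumes "a < m" "b < m" "D $$ (a, b) \<noteq> 0" shows "a < b"
proof (rule ccontr)
  assume "\<not> a < b"
  then have ba: "b \<le> a" by simp
  have "m = c k" using ip unfolding interval_partition_def by simp
  then have "a < c k" using assms(1) by simp
  then have "bk b \<le> bk a" using blk_mono[OF ba] by blast
  then show False using Dnz[OF assms] by simp
qed

lemma DDz: assumes "x < m" "y < m" shows "(\<Sum>l<m. D $$ (x, l) * D $$ (l, y)) = 0"
proof -
  have "(D * D) $$ (x, y) = 0" using DD assms by simp
  moreover have "(D * D) $$ (x, y) = row D x \<bullet> col D y" using assms Dc by simp
  moreover have "row D x \<bullet> col D y = (\<Sum>l\<in>{0..<m}. row D x $ l * col D y $ l)"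
    unfolding scalar_prod_def using Dc by simp
  moreover have "(\<Sum>l\<in>{0..<m}. row D x $ l * col D y $ l) = (\<Sum>l\<in>{0..<m}. D $$ (x, l) * D $$ (l, y))"
    using assms Dc by (intro sum.cong) auto
  moreover have "{0..<m} = {..<m}" by auto
  ultimately show ?thesis by simp
qed

definition INV :: "nat \<Rightarrow> (nat \<Rightarrow> nat \<Rightarrow> 'a) \<Rightarrow> (nat \<Rightarrow> nat) \<Rightarrow> nat set \<Rightarrow> bool" where
  "INV n b \<sigma> S \<longleftrightarrow> (\<forall>j<n. b j j \<noteq> 0) \<and> (\<forall>j<n. \<forall>x. j < x \<longrightarrow> b j x = 0)
    \<and> (\<forall>j<n. \<forall>x. b j x \<noteq> 0 \<longrightarrow> bk x = bk j)
    \<and> S \<subseteq> {..<n} \<and> \<sigma> ` S \<subseteq> {..<n} \<and> inj_on \<sigma> S \<and> \<sigma> ` S \<inter> S = {}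
    \<and> (\<forall>j<n. mv D m (b j) = (if j \<in> S then b (\<sigma> j) else (\<lambda>_. 0)))"

lemmas INVD1 = INV_def[THEN iffD1, THEN conjunct1]
lemmas INVD2 = INV_def[THEN iffD1, THEN conjunct2, THEN conjunct1]
lemmas INVD3 = INV_def[THEN iffD1, THEN conjunct2, THEN conjunct2, THEN conjunct1]
lemmas INVD4 = INV_def[THEN iffD1, THEN conjunct2, THEN conjunct2, THEN conjunct2, THEN conjunct1]
lemmas INVD5 = INV_def[THEN iffD1, THEN conjunct2, THEN conjunct2, THEN conjunct2, THEN conjunct2, THEN conjunct1]
lemmas INVD6 = INV_def[THEN iffD1, THEN conjunct2, THEN conjunct2, THEN conjunct2, THEN conjunct2, THEN conjunct2, THEN conjunct1]
lemmas INVD7 = INV_def[THEN iffD1, THEN conjunct2, THEN conjunct2, THEN conjunct2, THEN conjunct2, THEN conjunct2, THEN conjunct2, THEN conjunct1]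
lemmas INVD8 = INV_def[THEN iffD1, THEN conjunct2, THEN conjunct2, THEN conjunct2, THEN conjunct2, THEN conjunct2, THEN conjunct2, THEN conjunct2]
lemmas INVD = INVD1 INVD2 INVD3 INVD4 INVD5 INVD6 INVD7 INVD8

lemma src_blk:
  assumes I: "INV n b \<sigma> S" and n: "n \<le> m" and j: "j \<in> S"
  shows "bk j = bk (\<sigma> j) + 1"
proof -
  have jn: "j < n" using INVD(4)[OF I] j by auto
  have sjn: "\<sigma> j < n" using INVD(5)[OF I] j by auto
  have "mv D m (b j) = b (\<sigma> j)" using INVD(8)[OF I] j jn by simp
  moreover have "b (\<sigma> j) (\<sigma> j) \<noteq> 0" using INVD(1)[OF I] sjn by simp
  ultimately have nz: "mv D m (b j) (\<sigma> j) \<noteq> 0" by simp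
  then have "(\<Sum>y<m. D $$ (\<sigma> j, y) * b j y) \<noteq> 0" and sm: "\<sigma> j < m"
    unfolding mv_def by (auto split: if_splits)
  then obtain y where y0: "y \<in> {..<m}" "D $$ (\<sigma> j, y) * b j y \<noteq> 0"
    by (meson sum.not_neutral_contains_not_neutral)
  then have y: "y < m" "D $$ (\<sigma> j, y) \<noteq> 0" "b j y \<noteq> 0" by auto
  have "bk y = bk (\<sigma> j) + 1" using Dnz[OF sm y(1,2)] .
  moreover have "bk y = bk j" using INVD(3)[OF I] jn y(3) by simp
  ultimately show ?thesis by simp
qed

end

context setting begin

lemma step:
  assumes I: "INV n b \<sigma> S" and nm: "n < m"
  shows "\<exists>b' \<sigma>' S'. INV (Suc n) b' \<sigma>' S'"
proof -
  note d = INVD(1)[OF I] and u = INVD(2)[OF I] and bb = INVD(3)[OF I] and Sn = INVD(4)[OF I]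
    and Tn = INVD(5)[OF I] and inj = INVD(6)[OF I] and disj = INVD(7)[OF I] and mvb = INVD(8)[OF I]
  define Q where "Q x = (bk x + 1 = bk n)" for x
  define v where "v = (\<lambda>x. if x < m then D $$ (x, n) else 0)"
  have vs: "\<forall>x. v x \<noteq> 0 \<longrightarrow> x < n \<and> Q x"
  proof (intro allI impI)
    fix x assume "v x \<noteq> 0"
    then have "x < m" "D $$ (x, n) \<noteq> 0" unfolding v_def by (auto split: if_splits)
    then show "x < n \<and> Q x" using Dnz Dlt nm unfolding Q_def by auto
  qed
  have bQ: "\<forall>j<n. \<forall>x. b j x \<noteq> 0 \<longrightarrow> (Q x \<longleftrightarrow> Q j)" using bb unfolding Q_def by auto
  obtain w where vw: "v = lc w b {..<n}" and wQ: "\<forall>j. w j \<noteq> 0 \<longrightarrow> j < n \<and> Q j"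
    using lc_expand[OF d u bQ vs] by blast
  have mvv: "mv D m v = (\<lambda>_. 0)"
  proof
    fix x
    show "mv D m v x = 0"
    proof (cases "x < m")
      case True
      have "(\<Sum>y<m. D $$ (x, y) * v y) = (\<Sum>y<m. D $$ (x, y) * D $$ (y, n))"
        unfolding v_def by (intro sum.cong) auto
      then show ?thesis using True DDz[OF True nm] unfolding mv_def by simp
    qed (simp add: mv_def)
  qed
  have "mv D m v = lc w (\<lambda>j. mv D m (b j)) {..<n}" using vw mv_lc by simp
  have zS: "\<forall>x. (\<Sum>j\<in>S. w j * b (\<sigma> j) x) = 0"
  proof
    fix x
    have "0 = lc w (\<lambda>j. mv D m (b j)) {..<n} x"
      using \<open>mv D m v = lc w (\<lambda>j. mv D m (b j)) {..<n}\<close> mvv by metis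
    also have "\<dots> = (\<Sum>j\<in>{..<n}. if j \<in> S then w j * b (\<sigma> j) x else 0)"
      unfolding lc_def using mvb by (intro sum.cong) auto
    also have "\<dots> = (\<Sum>j\<in>S. w j * b (\<sigma> j) x)"
      using Sn by (simp add: sum.If_cases Int_absorb1)
    finally show "(\<Sum>j\<in>S. w j * b (\<sigma> j) x) = 0" by simp
  qed
  define \<tau> where "\<tau> = inv_into S \<sigma>"
  define T where "T = \<sigma> ` S"
  have zT: "\<forall>x. (\<Sum>i\<in>T. w (\<tau> i) * b i x) = 0"
  proof
    fix x
    have "(\<Sum>i\<in>T. w (\<tau> i) * b i x) = (\<Sum>j\<in>S. w (\<tau> (\<sigma> j)) * b (\<sigma> j) x)"
      unfolding T_def by (simp add: sum.reindex[OF inj])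
    also have "\<dots> = (\<Sum>j\<in>S. w j * b (\<sigma> j) x)"
      unfolding \<tau>_def using inv_into_f_f[OF inj] by (intro sum.cong) auto
    finally show "(\<Sum>i\<in>T. w (\<tau> i) * b i x) = 0" using zS by simp
  qed
  have wS: "\<forall>j\<in>S. w j = 0"
  proof
    fix j assume j: "j \<in> S"
    have "w (\<tau> (\<sigma> j)) = 0" using lc_indep_set[OF d u Tn zT[unfolded T_def]] j by blast
    then show "w j = 0" unfolding \<tau>_def using inv_into_f_f[OF inj j] by simp
  qed
  have \<tau>S: "\<forall>i\<in>T. \<tau> i \<in> S \<and> \<sigma> (\<tau> i) = i" unfolding T_def \<tau>_def
    by (auto simp: inv_into_into f_inv_into_f)
  define J where "J = {..<n} - S - T"
  define u' where "u' = lc w b J"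
  define bn where "bn = (\<lambda>x. (if x = n then 1 else 0) - lc w (\<lambda>i. b (\<tau> i)) T x)"
  have finS1: "finite S" by (rule finite_subset[OF Sn]) simp
  have finS2: "finite T" unfolding T_def by (rule finite_subset[OF Tn]) simp
  have finS3: "finite J" unfolding J_def by simp
  note finS = finS1 finS2 finS3
  have TJ: "T \<subseteq> {..<n}" "J \<subseteq> {..<n}" "S \<inter> T = {}" "S \<inter> J = {}" "T \<inter> J = {}"
    using Tn disj unfolding T_def J_def by auto
  have v_split: "\<forall>x. v x = lc w b T x + u' x"
  proof
    fix x
    have U: "{..<n} = S \<union> (T \<union> J)" using Sn TJ unfolding J_def by auto
    have "v x = (\<Sum>j\<in>S \<union> (T \<union> J). w j * b j x)" using vw U unfolding lc_def by simp
    also have "\<dots> = (\<Sum>j\<in>S. w j * b j x) + ((\<Sum>j\<in>T. w j * b j x) + (\<Sum>j\<in>J. w j * b j x))"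
      using finS TJ by (simp add: sum.union_disjoint Int_Un_distrib)
    also have "(\<Sum>j\<in>S. w j * b j x) = 0" using wS by simp
    finally show "v x = lc w b T x + u' x" unfolding lc_def u'_def by simp
  qed
  have mve: "mv D m (\<lambda>x. if x = n then 1 else 0) = v"
  proof
    fix x
    show "mv D m (\<lambda>x. if x = n then 1 else 0) x = v x"
      unfolding mv_def v_def using nm by (simp add: if_distrib cong: if_cong)
  qed
  have mvT: "mv D m (lc w (\<lambda>i. b (\<tau> i)) T) = lc w b T"
    unfolding mv_lc
  proof
    fix x
    show "lc w (\<lambda>j. mv D m (b (\<tau> j))) T x = lc w b T x"
      unfolding lc_def
    proof (intro sum.cong refl)
      fix i assume i: "i \<in> T"
      then have "\<tau> i < n" "\<tau> i \<in> S" using \<tau>S Sn by auto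
      then have "mv D m (b (\<tau> i)) = b i" using mvb \<tau>S i by auto
      then show "w i * mv D m (b (\<tau> i)) x = w i * b i x" by simp
    qed
  qed
  have mv_bn: "mv D m bn = u'"
  proof
    fix x
    show "mv D m bn x = u' x"
      unfolding bn_def mv_diff mve mvT using v_split by (simp add: algebra_simps)
  qed
  have mv_u: "mv D m u' = (\<lambda>_. 0)"
  proof
    fix x
    have "(\<Sum>j\<in>J. w j * mv D m (b j) x) = 0"
      using mvb TJ unfolding J_def by (intro sum.neutral) auto
    moreover have "mv D m u' x = lc w (\<lambda>j. mv D m (b j)) J x" unfolding u'_def mv_lc ..
    ultimately show "mv D m u' x = 0" unfolding lc_def by simp
  qed
  have bn_n: "bn n = 1"
  proof -
    have "lc w (\<lambda>i. b (\<tau> i)) T n = 0" unfolding lc_def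
      using \<tau>S Sn u by (intro sum.neutral) auto
    then show ?thesis unfolding bn_def by simp
  qed
  have bn_up: "\<forall>x. n < x \<longrightarrow> bn x = 0"
  proof (intro allI impI)
    fix x assume x: "n < x"
    have "lc w (\<lambda>i. b (\<tau> i)) T x = 0" unfolding lc_def
    proof (intro sum.neutral ballI)
      fix i assume "i \<in> T"
      then have "\<tau> i < n" using \<tau>S Sn by auto
      then show "w i * b (\<tau> i) x = 0" using u x by auto
    qed
    then show "bn x = 0" unfolding bn_def using x by simp
  qed
  have bn_blk: "\<forall>x. bn x \<noteq> 0 \<longrightarrow> bk x = bk n"
  proof (intro allI impI)
    fix x assume nz: "bn x \<noteq> 0"
    show "bk x = bk n"
    proof (cases "x = n")
      case False
      then have "lc w (\<lambda>i. b (\<tau> i)) T x \<noteq> 0" using nz unfolding bn_def by simp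
      then obtain i where i: "i \<in> T" "w i * b (\<tau> i) x \<noteq> 0" unfolding lc_def
        by (meson sum.not_neutral_contains_not_neutral)
      then have wi: "w i \<noteq> 0" and bt: "b (\<tau> i) x \<noteq> 0" by auto
      have ti: "\<tau> i \<in> S" "\<sigma> (\<tau> i) = i" "\<tau> i < n" using \<tau>S i Sn by auto
      have "bk (\<tau> i) = bk i + 1" using src_blk[OF I _ ti(1)] nm ti(2) by simp
      moreover have "bk i + 1 = bk n" using wQ wi unfolding Q_def by auto
      moreover have "bk x = bk (\<tau> i)" using bb ti(3) bt by auto
      ultimately show ?thesis by simp
    qed simp
  qed
  have nS: "n \<notin> S" "n \<notin> T" using Sn TJ by auto
  show ?thesis
  proof (cases "\<forall>j\<in>J. w j = 0")
    case True
    then have u0: "u' = (\<lambda>_. 0)" unfolding u'_def lc_def by auto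
    define b' where "b' = b(n := bn)"
    have "INV (Suc n) b' \<sigma> S"
      unfolding INV_def
    proof (intro conjI)
      show "\<forall>j<Suc n. b' j j \<noteq> 0" using d bn_n unfolding b'_def by (auto simp: less_Suc_eq)
      show "\<forall>j<Suc n. \<forall>x. j < x \<longrightarrow> b' j x = 0" using u bn_up unfolding b'_def by (auto simp: less_Suc_eq)
      show "\<forall>j<Suc n. \<forall>x. b' j x \<noteq> 0 \<longrightarrow> bk x = bk j" using bb bn_blk unfolding b'_def by (auto simp: less_Suc_eq)
      show "S \<subseteq> {..<Suc n}" "\<sigma> ` S \<subseteq> {..<Suc n}" using Sn Tn by auto
      show "inj_on \<sigma> S" "\<sigma> ` S \<inter> S = {}" by fact+
      show "\<forall>j<Suc n. mv D m (b' j) = (if j \<in> S then b' (\<sigma> j) else (\<lambda>_. 0))"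
      proof (intro allI impI)
        fix j assume "j < Suc n"
        then consider "j = n" | "j < n" by linarith
        then show "mv D m (b' j) = (if j \<in> S then b' (\<sigma> j) else (\<lambda>_. 0))"
        proof cases
          case 1 then show ?thesis using mv_bn u0 nS unfolding b'_def by simp
        next
          case 2
          then have "j \<in> S \<Longrightarrow> \<sigma> j \<noteq> n" using Tn by auto
          then show ?thesis using mvb 2 unfolding b'_def by auto
        qed
      qed
    qed
    then show ?thesis by blast
  next
    case False
    define i0 where "i0 = Max {j\<in>J. w j \<noteq> 0}"
    have fne: "finite {j\<in>J. w j \<noteq> 0}" "{j\<in>J. w j \<noteq> 0} \<noteq> {}" using finS False by auto
    have i0: "i0 \<in> J" "w i0 \<noteq> 0" using Max_in[OF fne] unfolding i0_def by auto
    have i0max: "\<forall>j\<in>J. w j \<noteq> 0 \<longrightarrow> j \<le> i0" using Max_ge[OF fne(1)] unfolding i0_def by auto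
    have i0n: "i0 < n" "i0 \<notin> S" "i0 \<notin> T" "i0 \<noteq> n" using i0 unfolding J_def by auto
    have u_i0: "u' i0 \<noteq> 0"
    proof -
      have "u' i0 = w i0 * b i0 i0 + (\<Sum>j\<in>J - {i0}. w j * b j i0)"
        unfolding u'_def lc_def using sum.remove[OF finS(3) i0(1)] by simp
      also have "(\<Sum>j\<in>J - {i0}. w j * b j i0) = 0"
      proof (intro sum.neutral ballI)
        fix j assume j: "j \<in> J - {i0}"
        show "w j * b j i0 = 0"
        proof (cases "w j = 0")
          case False
          then have "j < i0" using i0max j by fastforce
          then show ?thesis using u TJ j by auto
        qed simp
      qed
      finally show ?thesis using i0 d i0n by simp
    qed
    have u_up: "\<forall>x. i0 < x \<longrightarrow> u' x = 0"
    proof (intro allI impI)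
      fix x assume x: "i0 < x"
      show "u' x = 0" unfolding u'_def lc_def
      proof (intro sum.neutral ballI)
        fix j assume j: "j \<in> J"
        show "w j * b j x = 0"
        proof (cases "w j = 0")
          case False
          then have "j < x" using i0max j x by fastforce
          then show ?thesis using u TJ j by auto
        qed simp
      qed
    qed
    have u_blk: "\<forall>x. u' x \<noteq> 0 \<longrightarrow> bk x = bk i0"
    proof (intro allI impI)
      fix x assume "u' x \<noteq> 0"
      then obtain j where j: "j \<in> J" "w j * b j x \<noteq> 0" unfolding u'_def lc_def
        by (meson sum.not_neutral_contains_not_neutral)
      then have "Q j" "bk x = bk j" using wQ bb TJ by auto
      moreover have "Q i0" using wQ i0 by auto
      ultimately show "bk x = bk i0" unfolding Q_def by simp
    qed
    define b' where "b' = b(n := bn, i0 := u')"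
    define \<sigma>' where "\<sigma>' = \<sigma>(n := i0)"
    define S' where "S' = insert n S"
    have \<sigma>'S: "\<forall>j\<in>S. \<sigma>' j = \<sigma> j" using nS unfolding \<sigma>'_def by auto
    have img: "\<sigma>' ` S' = insert i0 T" unfolding S'_def T_def \<sigma>'_def using nS by auto
    have "INV (Suc n) b' \<sigma>' S'"
      unfolding INV_def
    proof (intro conjI)
      show "\<forall>j<Suc n. b' j j \<noteq> 0" using d bn_n u_i0 unfolding b'_def by (auto simp: less_Suc_eq)
      show "\<forall>j<Suc n. \<forall>x. j < x \<longrightarrow> b' j x = 0" using u bn_up u_up unfolding b'_def by (auto simp: less_Suc_eq)
      show "\<forall>j<Suc n. \<forall>x. b' j x \<noteq> 0 \<longrightarrow> bk x = bk j" using bb bn_blk u_blk unfolding b'_def by (auto simp: less_Suc_eq)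
      show "S' \<subseteq> {..<Suc n}" using Sn unfolding S'_def by auto
      show "\<sigma>' ` S' \<subseteq> {..<Suc n}" unfolding img using TJ i0n by auto
      show "inj_on \<sigma>' S'" unfolding S'_def
      proof (rule inj_on_insert[THEN iffD2], intro conjI)
        show "inj_on \<sigma>' S" using inj inj_on_cong[of S \<sigma>' \<sigma>] \<sigma>'S by blast
        have "\<sigma>' ` (S - {n}) = T" using \<sigma>'S unfolding T_def using nS by auto
        then show "\<sigma>' n \<notin> \<sigma>' ` (S - {n})" using i0n unfolding \<sigma>'_def by simp
      qed
      have "insert i0 T \<inter> S' = {}" unfolding S'_def using i0n nS TJ by auto
      then show "\<sigma>' ` S' \<inter> S' = {}" using img by simp
      show "\<forall>j<Suc n. mv D m (b' j) = (if j \<in> S' then b' (\<sigma>' j) else (\<lambda>_. 0))"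
      proof (intro allI impI)
        fix j assume "j < Suc n"
        then consider "j = n" | "j = i0" | "j < n" "j \<noteq> i0" by linarith
        then show "mv D m (b' j) = (if j \<in> S' then b' (\<sigma>' j) else (\<lambda>_. 0))"
        proof cases
          case 1 then show ?thesis using mv_bn i0n unfolding b'_def \<sigma>'_def S'_def by simp
        next
          case 2 then show ?thesis using mv_u i0n unfolding b'_def \<sigma>'_def S'_def by simp
        next
          case 3
          then have "j \<in> S \<Longrightarrow> \<sigma> j \<noteq> n \<and> \<sigma> j \<noteq> i0" using Tn i0n unfolding T_def by auto
          then show ?thesis using mvb 3 unfolding b'_def \<sigma>'_def S'_def by auto
        qed
      qed
    qed
    then show ?thesis by blast
  qed
qed

lemma exists_INV: "n \<le> m \<Longrightarrow> \<exists>b \<sigma> S. INV n b \<sigma> S"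
proof (induction n)
  case 0
  have "INV 0 (\<lambda>_ _. 0) id {}" unfolding INV_def by simp
  then show ?case by blast
next
  case (Suc n)
  then obtain b \<sigma> S where "INV n b \<sigma> S" by auto
  then show ?case using step Suc.prems by auto
qed

end

lemma concat_pairs_nth:
  assumes "i < length js"
  shows "concat (map (\<lambda>j. [f j, j]) js) ! (2 * i) = f (js ! i)"
    and "concat (map (\<lambda>j. [f j, j]) js) ! (2 * i + 1) = js ! i"
  using assms
proof (induction js arbitrary: i)
  case Nil case 1 then show ?case by simp
next
  case Nil case 2 then show ?case by simp
next
  case (Cons a js) case 1 then show ?case using Cons.IH(1)[of "i - 1"]
    by (cases i) (auto simp: nth_Cons')
next
  case (Cons a js) case 2 then show ?case using Cons.IH(2)[of "i - 1"]
    by (cases i) (auto simp: nth_Cons')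
qed

lemma length_concat_pairs: "length (concat (map (\<lambda>j. [f j, j]) js)) = 2 * length js"
  by (induction js) auto

lemma set_concat_pairs: "set (concat (map (\<lambda>j. [f j, j]) js)) = set js \<union> f ` set js"
  by (induction js) auto

lemma perm_matrix_mult:
  assumes "\<forall>j<m. q j < m"
  shows "perm_matrix m p * perm_matrix m q = (perm_matrix m (p \<circ> q) :: 'a::semiring_1 mat)"
proof (rule eq_matI)
  fix i j assume ij: "i < dim_row (perm_matrix m (p \<circ> q) :: 'a mat)" "j < dim_col (perm_matrix m (p \<circ> q) :: 'a mat)"
  then have i: "i < m" and j: "j < m" by (auto simp: perm_matrix_def)
  have "(perm_matrix m p * perm_matrix m q :: 'a mat) $$ (i, j)
     = (\<Sum>l\<in>{0..<m}. (if i = p l then 1 else 0) * (if l = q j then 1 else 0))"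
    using i j by (simp add: perm_matrix_def scalar_prod_def)
  also have "\<dots> = (\<Sum>l\<in>{0..<m}. if l = q j then (if i = p l then 1 else 0) else 0)"
    by (intro sum.cong) auto
  also have "\<dots> = (if i = p (q j) then 1 else 0)" using assms j by simp
  finally show "(perm_matrix m p * perm_matrix m q :: 'a mat) $$ (i, j) = perm_matrix m (p \<circ> q) $$ (i, j)"
    using i j by (simp add: perm_matrix_def)
qed (auto simp: perm_matrix_def)

lemma perm_matrix_id: "perm_matrix m id = (1\<^sub>m m :: 'a::semiring_1 mat)"
  by (rule eq_matI) (auto simp: perm_matrix_def)

lemma perm_conj_entry:
  fixes A :: "'a::semiring_1 mat"
  assumes p: "p permutes {..<m}" and A: "A \<in> carrier_mat m m" and x: "x < m" and y: "y < m"
  shows "(perm_matrix m (inv_into UNIV p) * A * perm_matrix m p) $$ (x, y) = A $$ (p x, p y)"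
proof -
  have pin: "\<And>z. z < m \<Longrightarrow> p z < m" using permutes_in_image[OF p] by auto
  have row: "\<And>z. z < m \<Longrightarrow> (perm_matrix m (inv_into UNIV p) * A) $$ (x, z) = A $$ (p x, z)"
  proof -
    fix z assume z: "z < m"
    have "(perm_matrix m (inv_into UNIV p) * A) $$ (x, z) = (\<Sum>l\<in>{0..<m}. (if x = inv_into UNIV p l then 1 else 0) * A $$ (l, z))"
      using x z A by (simp add: perm_matrix_def scalar_prod_def)
    also have "\<dots> = (\<Sum>l\<in>{0..<m}. if l = p x then A $$ (l, z) else 0)"
      by (intro sum.cong refl) (use permutes_inverses[OF p] in auto)
    also have "\<dots> = A $$ (p x, z)" using pin[OF x] by simp
    finally show "(perm_matrix m (inv_into UNIV p) * A) $$ (x, z) = A $$ (p x, z)" .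
  qed
  have "(perm_matrix m (inv_into UNIV p) * A * perm_matrix m p) $$ (x, y)
      = (\<Sum>l\<in>{0..<m}. (perm_matrix m (inv_into UNIV p) * A) $$ (x, l) * (if l = p y then 1 else 0))"
    using x y A by (simp add: perm_matrix_def scalar_prod_def)
  also have "\<dots> = (\<Sum>l\<in>{0..<m}. if l = p y then (perm_matrix m (inv_into UNIV p) * A) $$ (x, l) else 0)"
    by (intro sum.cong) auto
  also have "\<dots> = (perm_matrix m (inv_into UNIV p) * A) $$ (x, p y)" using pin[OF y] by simp
  also have "\<dots> = A $$ (p x, p y)" using row pin y by simp
  finally show ?thesis .
qed

lemma jordan_of_sizes_pairs:
  assumes "2 * r \<le> m"
  shows "(jordan_of_sizes (replicate r 2 @ replicate (m - 2 * r) 1) :: 'a::semiring_1 mat)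
       = mat m m (\<lambda>(a, b). if \<exists>i<r. a = 2 * i \<and> b = a + 1 then 1 else 0)"
proof -
  let ?ss = "replicate r (2::nat) @ replicate (m - 2 * r) 1"
  have sl: "sum_list ?ss = m" using assms by (simp add: sum_list_replicate)
  have cond: "(\<exists>i<length ?ss. ?ss ! i = 2 \<and> a = sum_list (take i ?ss) \<and> b = a + 1)
         \<longleftrightarrow> (\<exists>i<r. a = 2 * i \<and> b = a + 1)" for a b
  proof
    assume "\<exists>i<length ?ss. ?ss ! i = 2 \<and> a = sum_list (take i ?ss) \<and> b = a + 1"
    then obtain i where i: "i < length ?ss" "?ss ! i = 2" "a = sum_list (take i ?ss)" "b = a + 1" by blast
    have ir: "i < r" using i(1,2) by (auto simp: nth_append split: if_splits)
    then have "take i ?ss = replicate i 2" by (simp add: take_append)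
    then show "\<exists>i<r. a = 2 * i \<and> b = a + 1" using i ir by (auto simp: sum_list_replicate)
  next
    assume "\<exists>i<r. a = 2 * i \<and> b = a + 1"
    then obtain i where i: "i < r" "a = 2 * i" "b = a + 1" by blast
    then have "take i ?ss = replicate i 2" by (simp add: take_append)
    then show "\<exists>i<length ?ss. ?ss ! i = 2 \<and> a = sum_list (take i ?ss) \<and> b = a + 1"
      using i by (intro exI[of _ i]) (auto simp: nth_append sum_list_replicate)
  qed
  show ?thesis unfolding jordan_of_sizes_def sl by (simp only: cond)
qed

lemma match_almost_jordan:
  fixes S :: "nat set" and \<sigma> :: "nat \<Rightarrow> nat" and m :: nat
  assumes Sm: "S \<subseteq> {..<m}" and Tm: "\<sigma> ` S \<subseteq> {..<m}" and inj: "inj_on \<sigma> S"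
    and disj: "\<sigma> ` S \<inter> S = {}"
  shows "almost_jordan (mat m m (\<lambda>(i, j). if j \<in> S \<and> i = \<sigma> j then 1 else 0) :: 'a::field mat)"
proof -
  define Db where "Db = (mat m m (\<lambda>(i, j). if j \<in> S \<and> i = \<sigma> j then 1 else 0) :: 'a mat)"
  define js where "js = sorted_list_of_set S"
  define r where "r = length js"
  define R where "R = sorted_list_of_set ({..<m} - S - \<sigma> ` S)"
  define Pl where "Pl = concat (map (\<lambda>j. [\<sigma> j, j]) js)"
  define L where "L = Pl @ R"
  have finS: "finite S" by (rule finite_subset[OF Sm]) simp
  have setjs: "set js = S" unfolding js_def using finS by simp
  have distjs: "distinct js" unfolding js_def by simp
  have cardS: "card S = r" unfolding r_def using distinct_card[OF distjs] setjs by simp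
  have cardT: "card (\<sigma> ` S) = r" using card_image[OF inj] cardS by simp
  have setR: "set R = {..<m} - S - \<sigma> ` S" unfolding R_def by simp
  have distR: "distinct R" unfolding R_def by simp
  have setPl: "set Pl = S \<union> \<sigma> ` S" unfolding Pl_def set_concat_pairs setjs ..
  have lenPl: "length Pl = 2 * r" unfolding Pl_def length_concat_pairs r_def ..
  have setL: "set L = {..<m}" unfolding L_def using setPl setR Sm Tm by auto
  have finT: "finite (\<sigma> ` S)" using finS by simp
  have cardU: "card (S \<union> \<sigma> ` S) = 2 * r" proof -
    have "S \<inter> \<sigma> ` S = {}" using disj by auto
    then show ?thesis using card_Un_disjoint[OF finS finT] cardS cardT by simp
  qed
  have USm: "S \<union> \<sigma> ` S \<subseteq> {..<m}" using Sm Tm by auto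
  have rm: "2 * r \<le> m" using card_mono[OF _ USm] cardU by simp
  have "length R = card ({..<m} - S - \<sigma> ` S)" using distinct_card[OF distR] setR by simp
  also have "{..<m} - S - \<sigma> ` S = {..<m} - (S \<union> \<sigma> ` S)" by auto
  also have "card \<dots> = m - 2 * r" using card_Diff_subset[OF _ USm] cardU finS finT by simp
  finally have lenR: "length R = m - 2 * r" .
  have lenL: "length L = m" unfolding L_def using lenPl lenR rm by simp
  have distL: "distinct L" using card_distinct[of L] setL lenL by simp
  have Lnth: "L ! (2 * i) = \<sigma> (js ! i)" "L ! (2 * i + 1) = js ! i" if "i < r" for i
    using that concat_pairs_nth[of i js \<sigma>] lenPl unfolding L_def Pl_def r_def
    by (auto simp: nth_append)
  define p where "p x = (if x < m then L ! x else x)" for x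
  have "bij_betw ((!) L) {..<m} {..<m}" using bij_betw_nth[OF distL] lenL setL by simp
  then have bij: "bij_betw p {..<m} {..<m}" by (rule bij_betw_cong[THEN iffD1, rotated]) (simp add: p_def)
  have pperm: "p permutes {..<m}" by (rule bij_imp_permutes[OF bij]) (simp add: p_def)
  have qperm: "inv_into UNIV p permutes {..<m}" using permutes_inv[OF pperm] .
  have pin: "\<forall>j<m. p j < m" "\<forall>j<m. inv_into UNIV p j < m"
    using permutes_in_image[OF pperm] permutes_in_image[OF qperm] by auto
  have inv1: "perm_matrix m p * perm_matrix m (inv_into UNIV p) = (1\<^sub>m m :: 'a mat)"
    using perm_matrix_mult[OF pin(2), of p] permutes_inv_o(1)[OF pperm] perm_matrix_id by metis
  have inv2: "perm_matrix m (inv_into UNIV p) * perm_matrix m p = (1\<^sub>m m :: 'a mat)"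
    using perm_matrix_mult[OF pin(1), of "inv_into UNIV p"] permutes_inv_o(2)[OF pperm] perm_matrix_id by metis
  define J where "J = (mat m m (\<lambda>(a, b). if \<exists>i<r. a = 2 * i \<and> b = a + 1 then 1 else 0) :: 'a mat)"
  have key: "(p b \<in> S \<and> p a = \<sigma> (p b)) \<longleftrightarrow> (\<exists>i<r. a = 2 * i \<and> b = a + 1)" if ab: "a < m" "b < m" for a b
  proof
    assume H: "p b \<in> S \<and> p a = \<sigma> (p b)"
    then have "L ! b \<in> set js" using ab setjs unfolding p_def by simp
    then obtain i where i: "i < r" "js ! i = L ! b" unfolding r_def by (auto simp: in_set_conv_nth)
    have i1: "2 * i + 1 < m" using i rm by simp
    have "L ! (2 * i + 1) = L ! b" using Lnth(2)[OF i(1)] i(2) by simp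
    then have b: "b = 2 * i + 1" using nth_eq_iff_index_eq[OF distL] i1 ab lenL by simp
    have "L ! a = \<sigma> (js ! i)" using H ab i(2) unfolding p_def by simp
    then have "L ! (2 * i) = L ! a" using Lnth(1)[OF i(1)] by simp
    then have "a = 2 * i" using nth_eq_iff_index_eq[OF distL] i1 ab lenL by simp
    then show "\<exists>i<r. a = 2 * i \<and> b = a + 1" using b i by auto
  next
    assume "\<exists>i<r. a = 2 * i \<and> b = a + 1"
    then obtain i where i: "i < r" "a = 2 * i" "b = 2 * i + 1" by auto
    have "p b = js ! i" "p a = \<sigma> (js ! i)" using Lnth[OF i(1)] ab i unfolding p_def by auto
    moreover have "js ! i \<in> S" using i(1) setjs unfolding r_def by auto
    ultimately show "p b \<in> S \<and> p a = \<sigma> (p b)" by simp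
  qed
  have conj: "perm_matrix m (inv_into UNIV p) * Db * perm_matrix m p = J"
  proof (rule eq_matI)
    fix a b assume "a < dim_row J" "b < dim_col J"
    then have ab: "a < m" "b < m" unfolding J_def by auto
    have "(perm_matrix m (inv_into UNIV p) * Db * perm_matrix m p) $$ (a, b) = Db $$ (p a, p b)"
      by (rule perm_conj_entry[OF pperm _ ab]) (simp add: Db_def)
    also have "\<dots> = J $$ (a, b)" using key[OF ab] pin ab unfolding Db_def J_def by simp
    finally show "(perm_matrix m (inv_into UNIV p) * Db * perm_matrix m p) $$ (a, b) = J $$ (a, b)" .
  qed (auto simp: J_def perm_matrix_def Db_def)
  have diffJ: "differential J" unfolding differential_def
  proof
    show "square_mat J" unfolding J_def by simp
    show "J * J = 0\<^sub>m (dim_row J) (dim_col J)"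
    proof (rule eq_matI)
      fix a b assume "a < dim_row (0\<^sub>m (dim_row J) (dim_col J) :: 'a mat)" "b < dim_col (0\<^sub>m (dim_row J) (dim_col J) :: 'a mat)"
      then have ab: "a < m" "b < m" unfolding J_def by auto
      have "(J * J) $$ (a, b) = (\<Sum>l\<in>{0..<m}. J $$ (a, l) * J $$ (l, b))"
        using ab unfolding J_def by (simp add: scalar_prod_def)
      also have "\<dots> = 0"
      proof (intro sum.neutral ballI)
        fix l assume "l \<in> {0..<m}"
        then have l: "l < m" by simp
        show "J $$ (a, l) * J $$ (l, b) = 0"
        proof (cases "(\<exists>i<r. a = 2 * i \<and> l = a + 1) \<and> (\<exists>i<r. l = 2 * i \<and> b = l + 1)")
          case True
          then have False by (auto; presburger)
          then show ?thesis by simp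
        next
          case False then show ?thesis using ab l unfolding J_def by auto
        qed
      qed
      finally show "(J * J) $$ (a, b) = 0\<^sub>m (dim_row J) (dim_col J) $$ (a, b)" using ab unfolding J_def by simp
    qed (auto simp: J_def)
  qed
  have diffDb: "differential Db" unfolding differential_def
  proof
    show "square_mat Db" unfolding Db_def by simp
    show "Db * Db = 0\<^sub>m (dim_row Db) (dim_col Db)"
    proof (rule eq_matI)
      fix a b assume "a < dim_row (0\<^sub>m (dim_row Db) (dim_col Db) :: 'a mat)" "b < dim_col (0\<^sub>m (dim_row Db) (dim_col Db) :: 'a mat)"
      then have ab: "a < m" "b < m" unfolding Db_def by auto
      have "(Db * Db) $$ (a, b) = (\<Sum>l\<in>{0..<m}. Db $$ (a, l) * Db $$ (l, b))"
        using ab unfolding Db_def by (simp add: scalar_prod_def)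
      also have "\<dots> = 0"
      proof (intro sum.neutral ballI)
        fix l assume "l \<in> {0..<m}"
        then have l: "l < m" by simp
        show "Db $$ (a, l) * Db $$ (l, b) = 0"
        proof (cases "l \<in> S \<and> b \<in> S \<and> l = \<sigma> b")
          case True then show ?thesis using disj by auto
        next
          case False then show ?thesis using ab l unfolding Db_def by auto
        qed
      qed
      finally show "(Db * Db) $$ (a, b) = 0\<^sub>m (dim_row Db) (dim_col Db) $$ (a, b)" using ab unfolding Db_def by simp
    qed (auto simp: Db_def)
  qed
  have dimDb: "dim_row Db = m" unfolding Db_def by simp
  have "set (replicate r (2::nat) @ replicate (m - 2 * r) 1) \<subseteq> {1, 2}" by auto
  moreover have "J = jordan_of_sizes (replicate r (2::nat) @ replicate (m - 2 * r) 1)"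
    unfolding J_def by (rule jordan_of_sizes_pairs[OF rm, symmetric])
  ultimately have jJ: "jordan J" unfolding jordan_def using diffJ by blast
  have dimP: "dim_row (perm_matrix m p :: 'a mat) = m" "dim_row (perm_matrix m (inv_into UNIV p) :: 'a mat) = m"
    by (simp_all add: perm_matrix_def)
  have i1: "inverts_mat (perm_matrix m p) (perm_matrix m (inv_into UNIV p) :: 'a mat)"
    unfolding inverts_mat_def dimP using inv1 .
  have i2: "inverts_mat (perm_matrix m (inv_into UNIV p)) (perm_matrix m p :: 'a mat)"
    unfolding inverts_mat_def dimP using inv2 .
  have jj: "jordan (perm_matrix m (inv_into UNIV p) * Db * perm_matrix m p)" using conj jJ by simp
  have "almost_jordan Db" unfolding almost_jordan_def dimDb
    using diffDb pperm i1 i2 jj by blast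
  then show ?thesis unfolding Db_def .
qed

theorem theorem1p4:
  fixes D :: "'a::field mat" and m k :: nat and c :: "nat \<Rightarrow> nat"
  assumes "interval_partition m k c"
    and "D \<in> carrier_mat m m"
    and "differential D"
    and "block_superdiagonal k c D"
  shows "\<exists>Dbar B Binv. Dbar \<in> carrier_mat m m \<and> B \<in> carrier_mat m m \<and>
           almost_jordan Dbar \<and> block_superdiagonal k c Dbar \<and>
           triangular B \<and> block_diagonal k c B \<and>
           inverts_mat B Binv \<and> inverts_mat Binv B \<and>
           D = B * Dbar * Binv"
proof -
  have DD: "D * D = 0\<^sub>m m m" using assms(2,3) unfolding differential_def by simp
  have loc: "setting m k c D" using assms(1,2) DD assms(4) by (rule setting.intro)
  note ip = assms(1)
  obtain b \<sigma> S where I: "setting.INV m c D m b \<sigma> S" using setting.exists_INV[OF loc, of m] by blast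
  note d = setting.INVD1[OF loc I] and u = setting.INVD2[OF loc I] and bb = setting.INVD3[OF loc I]
    and Sn = setting.INVD4[OF loc I] and Tn = setting.INVD5[OF loc I] and inj = setting.INVD6[OF loc I]
    and disj = setting.INVD7[OF loc I] and mvb = setting.INVD8[OF loc I]
  define B where "B = (mat m m (\<lambda>(x, j). b j x) :: 'a mat)"
  define Db where "Db = (mat m m (\<lambda>(i, j). if j \<in> S \<and> i = \<sigma> j then 1 else 0) :: 'a mat)"
  have Bc: "B \<in> carrier_mat m m" and Dbc: "Db \<in> carrier_mat m m" unfolding B_def Db_def by auto
  have ut: "upper_triangular B" unfolding upper_triangular_def B_def using u by auto
  have "det B = prod_list (diag_mat B)" by (rule det_upper_triangular[OF ut Bc])
  also have "\<dots> \<noteq> 0" unfolding diag_mat_def B_def using d by (auto simp: prod_list_zero_iff)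
  finally have detB: "det B \<noteq> 0" .
  have "B \<in> Units (ring_mat TYPE('a) m undefined)" by (rule det_non_zero_imp_unit[OF Bc detB])
  then obtain Binv where Binv: "Binv \<in> carrier_mat m m" "Binv * B = 1\<^sub>m m" "B * Binv = 1\<^sub>m m"
    unfolding Units_def ring_mat_def by auto
  have dimB: "dim_row B = m" "dim_row Binv = m" using Bc Binv(1) by auto
  have inv1: "inverts_mat B Binv" "inverts_mat Binv B" unfolding inverts_mat_def dimB using Binv by auto
  have tri: "triangular B" unfolding triangular_def invertible_mat_def using ut inv1 Bc by auto
  have bdB: "block_diagonal k c B" unfolding bd_iff[OF ip]
  proof (intro allI impI)
    fix a j assume "a < m" "j < m" "B $$ (a, j) \<noteq> 0"
    then show "blk c a = blk c j" using bb unfolding B_def by auto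
  qed
  have bsdDb: "block_superdiagonal k c Db" unfolding bsd_iff[OF ip]
  proof (intro allI impI)
    fix a j assume "a < m" "j < m" "Db $$ (a, j) \<noteq> 0"
    then have "j \<in> S" "a = \<sigma> j" unfolding Db_def by (auto split: if_splits)
    then show "blk c j = blk c a + 1" using setting.src_blk[OF loc I le_refl] by simp
  qed
  have aj: "almost_jordan Db" unfolding Db_def by (rule match_almost_jordan[OF Sn _ inj disj]) (use Tn in auto)
  have comm: "D * B = B * Db"
  proof (rule eq_matI)
    fix x j assume "x < dim_row (B * Db)" "j < dim_col (B * Db)"
    then have xj: "x < m" "j < m" using Bc Dbc by auto
    have "(D * B) $$ (x, j) = (\<Sum>l\<in>{0..<m}. D $$ (x, l) * b j l)"
      using xj assms(2) unfolding B_def by (simp add: scalar_prod_def)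
    also have "\<dots> = mv D m (b j) x" unfolding mv_def using xj by (simp add: atLeast0LessThan)
    also have "\<dots> = (if j \<in> S then b (\<sigma> j) x else 0)" using mvb xj by simp
    also have "\<dots> = (\<Sum>l\<in>{0..<m}. b l x * (if j \<in> S \<and> l = \<sigma> j then 1 else 0))"
    proof (cases "j \<in> S")
      case True
      then have "\<sigma> j < m" using Tn by auto
      then show ?thesis using True by (simp add: if_distrib cong: if_cong)
    qed simp
    also have "\<dots> = (B * Db) $$ (x, j)"
      using xj unfolding B_def Db_def by (simp add: scalar_prod_def)
    finally show "(D * B) $$ (x, j) = (B * Db) $$ (x, j)" .
  qed (use Bc Dbc assms(2) in auto)
  have "B * Db * Binv = D * B * Binv" using comm by simp
  also have "\<dots> = D * (B * Binv)" using assms(2) Bc Binv(1) by (simp add: assoc_mult_mat)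
  also have "\<dots> = D" using Binv(3) assms(2) by simp
  finally have "D = B * Db * Binv" by simp
  then show ?thesis using Dbc Bc aj bsdDb tri bdB inv1 by blast
qed

end
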